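(* Let $\mathcal N$ be a network with parties $A_1,\dots,A_n$ all of whose sources are bipartite (each source is adjacent to exactly two parties), and let $p(a_1,\dots,a_n)$ be the output distribution of a causally consistent model on $\mathcal N$ (finite output alphabets). For each $i$ let $f_i$ be an arbitrary real-valued function of the output $a_i$. Then the covariance matrix $\mathcal C(f_1,\dots,f_n)$ admits an $\mathcal N$-compatible matrix decomposition.
   Context: A network $\mathcal N$ is a bipartite graph between sources $S_\alpha$ ($\alpha=1,\dots,m$) and parties $A_i$ ($i=1,\dots,n$); $\alpha\to i$ means $S_\alpha$ is adjacent to $A_i$. Every source has at least one adjacent party, every party has at least one adjacent source, and no two sources have comparable (under inclusion) sets of adjacent parties. Covariance matrix: for functions $f_i(a_i)$ and a joint distribution $p$ of outputs, $\mathcal C=\mathcal C(f_1,\dots,f_n)$ is the $n\times n$ matrix with $\mathcal C_{ij}=\mathbb E[\bar f_i f_j]-\mathbb E[\bar f_i]\,\mathbb E[f_j]$. $\mathcal N$-compatible matrix decomposition: for each source $\alpha$, let $\mathcal L_\alpha$ be the set of $n\times n$ complex positive semidefinite matrices $M_\alpha$ with $(M_\alpha)_{ij}\neq 0$ only if $\alpha\to i$ and $\alpha\to j$. A positive semidefinite $n\times n$ matrix $M$ admits an $\mathcal N$-compatible matrix decomposition if $M=\sum_\alpha M_\alpha$ with $M_\alpha\in\mathcal L_\alpha$ for all $\alpha$. Non-fanout inflation of order $d\ge 2$: choose, for every pair $(\alpha,i)$ with $\alpha\to i$, a permutation $\pi_i^\alpha$ of $\{1,\dots,d\}$. The inflated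 network $\widetilde{\mathcal N}$ has parties $A_i^{(k)}$ and sources $S_\alpha^{(k)}$ ($1\le k\le d$), with $S_\alpha^{(k)}$ adjacent to $A_i^{((\pi_i^\alpha)^{-1}(k))}$ whenever $\alpha\to i$, and no other adjacencies. Causally consistent model on $\mathcal N$: a joint distribution $p(a_1,\dots,a_n)$ of the outputs of $\mathcal N$ together with, for every non-fanout inflation $\widetilde{\mathcal N}$ of every order $d\ge2$, a joint distribution of the outputs $a_i^{(k)}$ of its parties, such that: (C0) if $A_i\neq A_j$ share no source in $\mathcal N$, then $p(a_i,a_j)=p(a_i)p(a_j)$; (C1) in every inflation, each $a_i^{(k)}$ has marginal distribution $p(a_i)$, and if $A_i^{(k)}$ and $A_j^{(l)}$ with $i\neq j$ share a source in $\widetilde{\mathcal N}$, then the joint distribution of $(a_i^{(k)},a_j^{(l)})$ equals $p(a_i,a_j)$; (C2) in every inflation, if two distinct parties share no source, the joint distribution of their outputs factorizes into the product of their marginals. *)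

theory Defs
  imports "HOL-Probability.Probability_Mass_Function"
begin

text \<open>Networks: sources of finite type 's, parties of finite type 'p,
  adjacency adj alpha i means "S_alpha -> A_i".\<close>

definition parties_of :: "('s \<Rightarrow> 'p \<Rightarrow> bool) \<Rightarrow> 's \<Rightarrow> 'p set" where
  "parties_of adj \<alpha> = {i. adj \<alpha> i}"

definition network :: "('s::finite \<Rightarrow> 'p::finite \<Rightarrow> bool) \<Rightarrow> bool" where
  "network adj \<longleftrightarrow>
     (\<forall>\<alpha>. \<exists>i. adj \<alpha> i) \<and>
     (\<forall>i. \<exists>\<alpha>. adj \<alpha> i) \<and>
     (\<forall>\<alpha> \<beta>. \<alpha> \<noteq> \<beta> \<longrightarrow> \<not> (parties_of adj \<alpha> \<subseteq> parties_of adj \<beta>))"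

definition bipartite_sources :: "('s \<Rightarrow> 'p \<Rightarrow> bool) \<Rightarrow> bool" where
  "bipartite_sources adj \<longleftrightarrow> (\<forall>\<alpha>. card (parties_of adj \<alpha>) = 2)"

definition share_source :: "('s \<Rightarrow> 'p \<Rightarrow> bool) \<Rightarrow> 'p \<Rightarrow> 'p \<Rightarrow> bool" where
  "share_source adj i j \<longleftrightarrow> (\<exists>\<alpha>. adj \<alpha> i \<and> adj \<alpha> j)"

text \<open>Non-fanout inflation of order d: pi alpha i is a permutation of {1..d}
  whenever alpha -> i. Inflated party (i,k), k in {1..d}, is adjacent to the
  inflated source S_alpha^(pi alpha i k).\<close>

definition inflation_perms :: "('s \<Rightarrow> 'p \<Rightarrow> bool) \<Rightarrow> nat \<Rightarrow> ('s \<Rightarrow> 'p \<Rightarrow> nat \<Rightarrow> nat) \<Rightarrow> bool" where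
  "inflation_perms adj d \<pi> \<longleftrightarrow> 2 \<le> d \<and>
     (\<forall>\<alpha> i. adj \<alpha> i \<longrightarrow> bij_betw (\<pi> \<alpha> i) {1..d} {1..d})"

definition infl_share_source ::
  "('s \<Rightarrow> 'p \<Rightarrow> bool) \<Rightarrow> ('s \<Rightarrow> 'p \<Rightarrow> nat \<Rightarrow> nat) \<Rightarrow> 'p \<times> nat \<Rightarrow> 'p \<times> nat \<Rightarrow> bool" where
  "infl_share_source adj \<pi> x y \<longleftrightarrow>
     (\<exists>\<alpha>. adj \<alpha> (fst x) \<and> adj \<alpha> (fst y) \<and> \<pi> \<alpha> (fst x) (snd x) = \<pi> \<alpha> (fst y) (snd y))"

definition marg1 :: "('i \<Rightarrow> 'a) pmf \<Rightarrow> 'i \<Rightarrow> 'a pmf" where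
  "marg1 q i = map_pmf (\<lambda>a. a i) q"

definition marg2 :: "('i \<Rightarrow> 'a) pmf \<Rightarrow> 'i \<Rightarrow> 'i \<Rightarrow> ('a \<times> 'a) pmf" where
  "marg2 q i j = map_pmf (\<lambda>a. (a i, a j)) q"

definition causally_consistent ::
  "('s::finite \<Rightarrow> 'p::finite \<Rightarrow> bool) \<Rightarrow> ('p \<Rightarrow> 'a) pmf \<Rightarrow> bool" where
  "causally_consistent adj p \<longleftrightarrow>
     (\<forall>i j. i \<noteq> j \<and> \<not> share_source adj i j \<longrightarrow>
        marg2 p i j = pair_pmf (marg1 p i) (marg1 p j)) \<and>
     (\<forall>d \<pi>. inflation_perms adj d \<pi> \<longrightarrow>
        (\<exists>q :: ('p \<times> nat \<Rightarrow> 'a) pmf.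
           (\<forall>i k. k \<in> {1..d} \<longrightarrow> marg1 q (i, k) = marg1 p i) \<and>
           (\<forall>i j k l. i \<noteq> j \<and> k \<in> {1..d} \<and> l \<in> {1..d} \<and>
              infl_share_source adj \<pi> (i, k) (j, l) \<longrightarrow>
              marg2 q (i, k) (j, l) = marg2 p i j) \<and>
           (\<forall>x y. x \<noteq> y \<and> snd x \<in> {1..d} \<and> snd y \<in> {1..d} \<and>
              \<not> infl_share_source adj \<pi> x y \<longrightarrow>
              marg2 q x y = pair_pmf (marg1 q x) (marg1 q y))))"

definition cov_matrix :: "('p \<Rightarrow> 'a) pmf \<Rightarrow> ('p \<Rightarrow> 'a \<Rightarrow> complex) \<Rightarrow> 'p \<Rightarrow> 'p \<Rightarrow> complex" where
  "cov_matrix p f i j =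
     measure_pmf.expectation p (\<lambda>a. cnj (f i (a i)) * f j (a j))
     - cnj (measure_pmf.expectation p (\<lambda>a. f i (a i))) * measure_pmf.expectation p (\<lambda>a. f j (a j))"

definition psd :: "('p::finite \<Rightarrow> 'p \<Rightarrow> complex) \<Rightarrow> bool" where
  "psd M \<longleftrightarrow> (\<forall>i j. M j i = cnj (M i j)) \<and>
     (\<forall>v. 0 \<le> Re (\<Sum>i\<in>UNIV. \<Sum>j\<in>UNIV. cnj (v i) * M i j * v j))"

definition N_compatible_decomp ::
  "('s::finite \<Rightarrow> 'p::finite \<Rightarrow> bool) \<Rightarrow> ('p \<Rightarrow> 'p \<Rightarrow> complex) \<Rightarrow> bool" where
  "N_compatible_decomp adj M \<longleftrightarrow>
     (\<exists>L :: 's \<Rightarrow> 'p \<Rightarrow> 'p \<Rightarrow> complex.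
        (\<forall>\<alpha>. psd (L \<alpha>) \<and> (\<forall>i j. L \<alpha> i j \<noteq> 0 \<longrightarrow> adj \<alpha> i \<and> adj \<alpha> j)) \<and>
        (\<forall>i j. M i j = (\<Sum>\<alpha>\<in>UNIV. L \<alpha> i j)))"

end

theory Submission
  imports Defs
begin

lemma fin_int[simp, intro]: "integrable (measure_pmf (M :: 'b::finite pmf)) (g :: 'b \<Rightarrow> 'c::{banach, second_countable_topology})"
  by (rule integrable_measure_pmf_finite) (rule finite_subset[of _ UNIV], auto)

definition mu :: "('p \<Rightarrow> 'a) pmf \<Rightarrow> ('p \<Rightarrow> 'a \<Rightarrow> real) \<Rightarrow> 'p \<Rightarrow> real" where
  "mu p f i = measure_pmf.expectation p (\<lambda>a. f i (a i))"

definition rc :: "('p \<Rightarrow> 'a) pmf \<Rightarrow> ('p \<Rightarrow> 'a \<Rightarrow> real) \<Rightarrow> 'p \<Rightarrow> 'p \<Rightarrow> real" where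
  "rc p f i j = measure_pmf.expectation p (\<lambda>a. f i (a i) * f j (a j)) - mu p f i * mu p f j"

lemma rc_sym: "rc p f i j = rc p f j i"
  unfolding rc_def by (simp add: mult.commute)

lemma cov_real: "cov_matrix p (\<lambda>i x. complex_of_real (f i x)) i j = complex_of_real (rc p f i j)"
proof -
  have e: "(\<lambda>a. cnj (complex_of_real (f i (a i))) * complex_of_real (f j (a j))) = (\<lambda>a. complex_of_real (f i (a i) * f j (a j)))"
    by simp
  show ?thesis
    unfolding cov_matrix_def rc_def mu_def e integral_complex_of_real by simp
qed

lemma centered:
  fixes p :: "('p::finite \<Rightarrow> 'a::finite) pmf"
  shows "measure_pmf.expectation p (\<lambda>a. (f i (a i) - mu p f i) * (f j (a j) - mu p f j)) = rc p f i j"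
proof -
  have "(\<lambda>a. (f i (a i) - mu p f i) * (f j (a j) - mu p f j)) =
     (\<lambda>a. f i (a i) * f j (a j) - mu p f j * f i (a i) - mu p f i * f j (a j) + mu p f i * mu p f j)"
    by (auto simp: algebra_simps)
  then show ?thesis
    by (simp add: Bochner_Integration.integral_diff Bochner_Integration.integral_add rc_def mu_def)
qed

lemma mean_zero:
  fixes p :: "('p::finite \<Rightarrow> 'a::finite) pmf"
  shows "measure_pmf.expectation p (\<lambda>a. f i (a i) - mu p f i) = 0"
  by (simp add: Bochner_Integration.integral_diff mu_def)

lemma rc_form:
  fixes p :: "('p::finite \<Rightarrow> 'a::finite) pmf"
  shows "0 \<le> (\<Sum>i\<in>UNIV. \<Sum>j\<in>UNIV. x i * rc p f i j * x j)"
proof -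
  let ?h = "\<lambda>i a. f i (a i) - mu p f i"
  have "(\<Sum>i\<in>UNIV. \<Sum>j\<in>UNIV. x i * rc p f i j * x j) =
     (\<Sum>i\<in>UNIV. \<Sum>j\<in>UNIV. measure_pmf.expectation p (\<lambda>a. x i * (?h i a * ?h j a) * x j))"
    by (simp only: integral_mult_left_zero integral_mult_right_zero centered)
  also have "\<dots> = measure_pmf.expectation p (\<lambda>a. \<Sum>i\<in>UNIV. \<Sum>j\<in>UNIV. x i * (?h i a * ?h j a) * x j)"
    by (simp add: Bochner_Integration.integral_sum)
  also have "\<dots> = measure_pmf.expectation p (\<lambda>a. (\<Sum>i\<in>UNIV. x i * ?h i a)^2)"
  proof -
    have "\<And>a. (\<Sum>i\<in>UNIV. x i * ?h i a)^2 = (\<Sum>i\<in>UNIV. \<Sum>j\<in>UNIV. x i * (?h i a * ?h j a) * x j)"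
      unfolding power2_eq_square sum_product by (simp add: ac_simps)
    then show ?thesis by simp
  qed
  also have "\<dots> \<ge> 0" by simp
  finally show ?thesis .
qed

lemma psd_real:
  fixes R :: "'p::finite \<Rightarrow> 'p \<Rightarrow> real"
  assumes sym: "\<And>i j. R i j = R j i" and pos: "\<And>x. 0 \<le> (\<Sum>i\<in>UNIV. \<Sum>j\<in>UNIV. x i * R i j * x j)"
  shows "psd (\<lambda>i j. complex_of_real (R i j))"
  unfolding psd_def
proof (intro conjI allI)
  fix i j show "complex_of_real (R j i) = cnj (complex_of_real (R i j))" using sym by simp
next
  fix v :: "'p \<Rightarrow> complex"
  have "Re (\<Sum>i\<in>UNIV. \<Sum>j\<in>UNIV. cnj (v i) * complex_of_real (R i j) * v j) =
     (\<Sum>i\<in>UNIV. \<Sum>j\<in>UNIV. Re (v i) * R i j * Re (v j)) + (\<Sum>i\<in>UNIV. \<Sum>j\<in>UNIV. Im (v i) * R i j * Im (v j))"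
    by (simp add: Re_sum sum.distrib[symmetric] algebra_simps)
  then show "0 \<le> Re (\<Sum>i\<in>UNIV. \<Sum>j\<in>UNIV. cnj (v i) * complex_of_real (R i j) * v j)"
    using pos[of "\<lambda>i. Re (v i)"] pos[of "\<lambda>i. Im (v i)"] by simp
qed

lemma pair_exp:
  fixes A B :: "'a::finite pmf" and \<phi> \<psi> :: "'a \<Rightarrow> real"
  shows "measure_pmf.expectation (pair_pmf A B) (\<lambda>z. \<phi> (fst z) * \<psi> (snd z)) =
    measure_pmf.expectation A \<phi> * measure_pmf.expectation B \<psi>"
proof -
  have "measure_pmf.expectation (pair_pmf A B) (\<lambda>z. \<phi> (fst z) * \<psi> (snd z)) =
     (\<Sum>z\<in>UNIV. \<phi> (fst z) * \<psi> (snd z) * pmf (pair_pmf A B) z)"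
    by (rule integral_measure_pmf_real) auto
  also have "\<dots> = (\<Sum>z\<in>UNIV \<times> UNIV. (\<phi> (fst z) * pmf A (fst z)) * (\<psi> (snd z) * pmf B (snd z)))"
    by (rule sum.cong) (auto simp: pmf_pair)
  also have "\<dots> = (\<Sum>u\<in>UNIV. \<Sum>v\<in>UNIV. (\<phi> u * pmf A u) * (\<psi> v * pmf B v))"
    by (simp add: sum.cartesian_product case_prod_beta)
  also have "\<dots> = (\<Sum>u\<in>UNIV. \<phi> u * pmf A u) * (\<Sum>v\<in>UNIV. \<psi> v * pmf B v)"
    by (simp add: sum_product)
  also have "\<dots> = measure_pmf.expectation A \<phi> * measure_pmf.expectation B \<psi>"
    by (simp add: integral_measure_pmf_real[of UNIV])
  finally show ?thesis .
qed

lemma form_insert: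
  fixes K :: "'p \<Rightarrow> 'p \<Rightarrow> real"
  assumes fin: "finite S" and iS: "i \<notin> S" and sym: "\<And>l. l \<in> S \<Longrightarrow> K l i = K i l"
  shows "(\<Sum>a\<in>insert i S. \<Sum>b\<in>insert i S. (y(i:=t)) a * K a b * (y(i:=t)) b) =
    K i i * t^2 + 2 * t * (\<Sum>l\<in>S. K i l * y l) + (\<Sum>a\<in>S. \<Sum>b\<in>S. y a * K a b * y b)"
proof -
  define x where "x = y(i:=t)"
  have xi: "x i = t" unfolding x_def by simp
  have xS: "\<And>l. l \<in> S \<Longrightarrow> x l = y l" unfolding x_def using iS by auto
  have inner: "(\<Sum>b\<in>insert i S. x a * K a b * x b) = x a * K a i * t + (\<Sum>b\<in>S. x a * K a b * y b)" for a
    using xi xS by (simp add: sum.insert[OF fin iS])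
  have "(\<Sum>a\<in>insert i S. \<Sum>b\<in>insert i S. x a * K a b * x b) =
     (t * K i i * t + (\<Sum>b\<in>S. t * K i b * y b)) + (\<Sum>a\<in>S. y a * K a i * t + (\<Sum>b\<in>S. y a * K a b * y b))"
    unfolding inner sum.insert[OF fin iS] xi using xS by simp
  also have "\<dots> = (t * K i i * t + (\<Sum>b\<in>S. t * K i b * y b)) + ((\<Sum>a\<in>S. y a * K a i * t) + (\<Sum>a\<in>S. \<Sum>b\<in>S. y a * K a b * y b))"
    by (simp add: sum.distrib)
  also have "(\<Sum>a\<in>S. y a * K a i * t) = (\<Sum>b\<in>S. t * K i b * y b)"
    using sym by (intro sum.cong) auto
  also have "(\<Sum>b\<in>S. t * K i b * y b) = t * (\<Sum>l\<in>S. K i l * y l)"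
    by (simp add: sum_distrib_left mult.assoc)
  finally show ?thesis unfolding x_def by (simp add: power2_eq_square algebra_simps)
qed

lemma exists_pos:
  fixes K :: "'p \<Rightarrow> 'p \<Rightarrow> real"
  assumes "finite S"
  shows "(\<forall>i\<in>S. \<forall>j\<in>S. K i j = K j i) \<Longrightarrow> (\<forall>i\<in>S. \<forall>j\<in>S. i \<noteq> j \<longrightarrow> K i j \<le> 0) \<Longrightarrow>
    (\<forall>y. 0 \<le> (\<Sum>a\<in>S. \<Sum>b\<in>S. y a * K a b * y b)) \<Longrightarrow>
    \<exists>u. (\<forall>i\<in>S. 0 < u i) \<and> (\<forall>i\<in>S. 0 \<le> (\<Sum>j\<in>S. K i j * u j))"
  using assms
proof (induction S arbitrary: K rule: finite_induct)
  case empty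
  then show ?case by auto
next
  case (insert i S)
  note fin = insert.hyps(1) and iS = insert.hyps(2)
  have sym: "\<And>l. l \<in> S \<Longrightarrow> K l i = K i l" using insert.prems(1) by (meson insertI1 insertI2)
  define d where "d = K i i"
  define b where "b y = (\<Sum>l\<in>S. K i l * y l)" for y :: "'p \<Rightarrow> real"
  define Q where "Q y = (\<Sum>a\<in>S. \<Sum>b\<in>S. y a * K a b * y b)" for y :: "'p \<Rightarrow> real"
  have form: "0 \<le> d * t^2 + 2 * t * b y + Q y" for y t
  proof -
    have "0 \<le> (\<Sum>a\<in>insert i S. \<Sum>b\<in>insert i S. (y(i:=t)) a * K a b * (y(i:=t)) b)"
      by (rule insert.prems(3)[rule_format])
    also have "\<dots> = K i i * t^2 + 2 * t * (\<Sum>l\<in>S. K i l * y l) + (\<Sum>a\<in>S. \<Sum>b\<in>S. y a * K a b * y b)"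
      by (rule form_insert[where K=K, OF fin iS sym])
    also have "\<dots> = d * t^2 + 2 * t * b y + Q y"
      unfolding d_def b_def Q_def by (rule refl)
    finally show ?thesis .
  qed
  have d0: "0 \<le> d" using form[of 1 "\<lambda>_. 0"] by (simp add: b_def Q_def)
  define K' where "K' j l = K j l - K j i * K i l / d" for j l
  have Q'eq: "(\<Sum>a\<in>S. \<Sum>c\<in>S. y a * K' a c * y c) = Q y - (b y)^2 / d" for y
  proof -
    have pt: "y a * K' a c * y c = y a * K a c * y c - ((y a * K i a) * (K i c * y c)) / d" if a: "a \<in> S" for a c
      unfolding K'_def using sym[OF a] by (simp add: right_diff_distrib left_diff_distrib mult_ac)
    have "(\<Sum>a\<in>S. \<Sum>c\<in>S. y a * K' a c * y c) =
        (\<Sum>a\<in>S. \<Sum>c\<in>S. y a * K a c * y c - ((y a * K i a) * (K i c * y c)) / d)"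
      using pt by (intro sum.cong refl) auto
    also have "\<dots> = Q y - (\<Sum>a\<in>S. \<Sum>c\<in>S. (y a * K i a) * (K i c * y c)) / d"
      unfolding Q_def by (simp only: sum_subtractf sum_divide_distrib)
    also have "(\<Sum>a\<in>S. \<Sum>c\<in>S. (y a * K i a) * (K i c * y c)) = (\<Sum>a\<in>S. y a * K i a) * (\<Sum>c\<in>S. K i c * y c)"
      by (simp only: sum_product)
    also have "(\<Sum>a\<in>S. y a * K i a) = b y" unfolding b_def by (simp only: mult.commute)
    also have "(\<Sum>c\<in>S. K i c * y c) = b y" unfolding b_def ..
    finally show ?thesis by (simp only: power2_eq_square)
  qed
  have psd': "\<forall>y. 0 \<le> (\<Sum>a\<in>S. \<Sum>c\<in>S. y a * K' a c * y c)"
  proof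
    fix y
    have "d * (- b y / d)^2 + 2 * (- b y / d) * b y + Q y = Q y - (b y)^2 / d"
      by (cases "d = 0") (simp_all add: field_simps power2_eq_square)
    then show "0 \<le> (\<Sum>a\<in>S. \<Sum>c\<in>S. y a * K' a c * y c)"
      using form[of "- b y / d" y] Q'eq by simp
  qed
  have sym': "\<forall>j\<in>S. \<forall>l\<in>S. K' j l = K' l j"
  proof (intro ballI)
    fix j l assume j: "j \<in> S" and l: "l \<in> S"
    have e1: "K j l = K l j" using insert.prems(1) j l by blast
    show "K' j l = K' l j" unfolding K'_def by (simp add: e1 sym[OF j] sym[OF l] mult.commute)
  qed
  have z': "\<forall>j\<in>S. \<forall>l\<in>S. j \<noteq> l \<longrightarrow> K' j l \<le> 0"
  proof (intro ballI impI)
    fix j l assume j: "j \<in> S" and l: "l \<in> S" and jl: "j \<noteq> l"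
    have ji: "j \<noteq> i" "i \<noteq> l" using j l iS by auto
    have "K j i \<le> 0" using insert.prems(2) j ji by blast
    moreover have "K i l \<le> 0" using insert.prems(2) l ji by blast
    moreover have "K j l \<le> 0" using insert.prems(2) j l jl by blast
    ultimately have "K j i \<le> 0" "K i l \<le> 0" "K j l \<le> 0" by auto
    then have "0 \<le> K j i * K i l / d" using d0 by (simp add: mult_nonpos_nonpos)
    then show "K' j l \<le> 0" unfolding K'_def using \<open>K j l \<le> 0\<close> by simp
  qed
  obtain u' where u'pos: "\<forall>l\<in>S. 0 < u' l" and u'row: "\<forall>j\<in>S. 0 \<le> (\<Sum>l\<in>S. K' j l * u' l)"
    using insert.IH[OF sym' z' psd'] by blast
  define s where "s = (\<Sum>l\<in>S. (- K i l) * u' l)"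
  have Kil: "K i l \<le> 0" if l: "l \<in> S" for l
  proof -
    have "i \<noteq> l" using l iS by auto
    then show ?thesis using insert.prems(2) l by blast
  qed
  have terms: "0 \<le> (- K i l) * u' l" if l: "l \<in> S" for l
  proof -
    have "0 < u' l" using u'pos l by blast
    then show ?thesis using Kil[OF l] by (simp add: mult_nonpos_nonneg)
  qed
  have s0: "0 \<le> s" unfolding s_def using terms by (simp add: sum_nonneg)
  have szero: "s = 0 \<Longrightarrow> \<forall>l\<in>S. K i l = 0"
  proof -
    assume "s = 0"
    have iff: "(\<Sum>l\<in>S. (- K i l) * u' l) = 0 \<longleftrightarrow> (\<forall>l\<in>S. (- K i l) * u' l = 0)"
      by (rule sum_nonneg_eq_0_iff[OF fin]) (rule terms)
    with \<open>s = 0\<close> have "\<forall>l\<in>S. (- K i l) * u' l = 0" unfolding s_def by blast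
    then show ?thesis using u'pos by fastforce
  qed
  have bu': "b u' = - s" unfolding b_def s_def by (simp add: sum_negf)
  have dpos: "s \<noteq> 0 \<Longrightarrow> 0 < d"
  proof (rule ccontr)
    assume sn: "s \<noteq> 0" and "\<not> 0 < d"
    then have "d = 0" using d0 by simp
    have sp: "0 < s" using sn s0 by simp
    have "0 \<le> d * ((Q u' + 1) / (2 * s))^2 + 2 * ((Q u' + 1) / (2 * s)) * b u' + Q u'" by (rule form)
    also have "\<dots> = -1" using \<open>d = 0\<close> bu' sp by (simp add: field_simps)
    finally show False by simp
  qed
  define u where "u = u'(i := (if s = 0 then 1 else s / d))"
  have upos: "\<forall>j\<in>insert i S. 0 < u j"
    using u'pos dpos s0 unfolding u_def by (auto simp: field_simps)
  have uS: "\<And>l. l \<in> S \<Longrightarrow> u l = u' l" unfolding u_def using iS by auto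
  have rowi: "0 \<le> (\<Sum>j\<in>insert i S. K i j * u j)"
  proof -
    have "(\<Sum>j\<in>insert i S. K i j * u j) = d * u i - s"
      using fin iS uS unfolding d_def s_def by (simp add: sum.insert sum_negf cong: sum.cong)
    moreover have "0 \<le> d * u i - s"
    proof (cases "s = 0")
      case True then show ?thesis using d0 unfolding u_def by simp
    next
      case False then have "0 < d" using dpos by simp
      then show ?thesis using False unfolding u_def by simp
    qed
    ultimately show ?thesis by simp
  qed
  have rowj: "0 \<le> (\<Sum>l\<in>insert i S. K j l * u l)" if j: "j \<in> S" for j
  proof -
    have "(\<Sum>l\<in>insert i S. K j l * u l) = K j i * u i + (\<Sum>l\<in>S. K j l * u' l)"
      using fin iS uS by (simp add: sum.insert cong: sum.cong)
    moreover have "(\<Sum>l\<in>S. K' j l * u' l) = (\<Sum>l\<in>S. K j l * u' l) + K j i * s / d"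
      unfolding K'_def s_def by (simp add: algebra_simps sum_subtractf sum_divide_distrib sum_distrib_left sum_negf)
    moreover have "0 \<le> (\<Sum>l\<in>S. K' j l * u' l)" using u'row j by auto
    moreover have "s = 0 \<Longrightarrow> K j i = 0" using szero sym j by auto
    ultimately show ?thesis unfolding u_def by (cases "s = 0") auto
  qed
  show ?case using upos rowi rowj by blast
qed

lemma two_parties:
  assumes "bipartite_sources adj"
  obtains a b where "a \<noteq> b" "\<And>x. adj \<alpha> x \<longleftrightarrow> x = a \<or> x = b"
proof -
  have "card (parties_of adj \<alpha>) = 2" using assms unfolding bipartite_sources_def by blast
  then obtain a b where "parties_of adj \<alpha> = {a, b}" "a \<noteq> b" unfolding card_2_iff by blast
  then show ?thesis using that unfolding parties_of_def by (metis insert_iff mem_Collect_eq singletonD)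
qed

lemma adj_other:
  assumes "bipartite_sources adj" "adj \<alpha> i" "adj \<alpha> j" "i \<noteq> j" "adj \<alpha> x"
  shows "x = i \<or> x = j"
  using two_parties[OF assms(1), of \<alpha>] assms(2-5) by metis

lemma unique_src:
  assumes net: "network adj" and bip: "bipartite_sources adj"
    and "i \<noteq> j" "adj \<alpha> i" "adj \<alpha> j" "adj \<beta> i" "adj \<beta> j"
  shows "\<alpha> = \<beta>"
proof (rule ccontr)
  assume ne: "\<alpha> \<noteq> \<beta>"
  have "parties_of adj \<alpha> \<subseteq> parties_of adj \<beta>"
    unfolding parties_of_def using adj_other[OF bip, of \<alpha> i j] assms(3-7) by auto
  then show False using net ne unfolding network_def by blast
qed

lemma sum_single:
  fixes F :: "'b::finite \<Rightarrow> 'c::comm_monoid_add"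
  assumes "\<And>y. y \<noteq> a \<Longrightarrow> F y = 0"
  shows "(\<Sum>y\<in>UNIV. F y) = F a"
proof -
  have "(\<Sum>y\<in>UNIV. F y) = (\<Sum>y\<in>{a}. F y)"
    by (rule sum.mono_neutral_right) (use assms in auto)
  then show ?thesis by simp
qed

lemma sum_two:
  fixes F :: "'b::finite \<Rightarrow> 'c::comm_monoid_add"
  assumes "a \<noteq> b" "\<And>y. y \<noteq> a \<Longrightarrow> y \<noteq> b \<Longrightarrow> F y = 0"
  shows "(\<Sum>y\<in>UNIV. F y) = F a + F b"
proof -
  have "(\<Sum>y\<in>UNIV. F y) = (\<Sum>y\<in>{a, b}. F y)"
    by (rule sum.mono_neutral_right) (use assms in auto)
  then show ?thesis using assms(1) by simp
qed

lemma ineq2: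
  fixes A B c xa xb ua ub :: real
  assumes ua: "0 < ua" and ub: "0 < ub" and A: "\<bar>c\<bar> * ub / ua \<le> A" and B: "\<bar>c\<bar> * ua / ub \<le> B"
  shows "0 \<le> A * xa^2 + 2 * c * xa * xb + B * xb^2"
proof -
  have sq: "0 \<le> (ub * \<bar>xa\<bar> - ua * \<bar>xb\<bar>)^2" by simp
  have k: "2 * ua * ub * \<bar>xa\<bar> * \<bar>xb\<bar> \<le> ub^2 * xa^2 + ua^2 * xb^2"
    using sq by (simp add: power2_eq_square algebra_simps)
  have k2: "2 * \<bar>xa\<bar> * \<bar>xb\<bar> \<le> ub / ua * xa^2 + ua / ub * xb^2"
  proof -
    have "2 * \<bar>xa\<bar> * \<bar>xb\<bar> = (2 * ua * ub * \<bar>xa\<bar> * \<bar>xb\<bar>) / (ua * ub)" using ua ub by simp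
    also have "\<dots> \<le> (ub^2 * xa^2 + ua^2 * xb^2) / (ua * ub)"
      using k by (rule divide_right_mono) (use ua ub in simp)
    also have "\<dots> = ub / ua * xa^2 + ua / ub * xb^2"
      using ua ub by (simp add: field_simps power2_eq_square)
    finally show ?thesis .
  qed
  have "- (2 * c * xa * xb) \<le> \<bar>c\<bar> * (2 * \<bar>xa\<bar> * \<bar>xb\<bar>)"
    by (simp add: abs_mult[symmetric] abs_le_iff mult.assoc)
  also have "\<dots> \<le> \<bar>c\<bar> * (ub / ua * xa^2 + ua / ub * xb^2)"
    using k2 by (simp add: mult_left_mono)
  also have "\<dots> = (\<bar>c\<bar> * ub / ua) * xa^2 + (\<bar>c\<bar> * ua / ub) * xb^2" by (simp add: algebra_simps)
  also have "\<dots> \<le> A * xa^2 + B * xb^2"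
    using A B by (intro add_mono mult_right_mono) auto
  finally show ?thesis by simp
qed

lemma E1: "measure_pmf.expectation Q (\<lambda>a. \<phi> (a x)) = measure_pmf.expectation (marg1 Q x) (\<phi> :: _ \<Rightarrow> real)"
  by (simp add: marg1_def)

lemma E2: "measure_pmf.expectation Q (\<lambda>a. \<phi> (a x) * \<psi> (a y)) =
    measure_pmf.expectation (marg2 Q x y) (\<lambda>z. \<phi> (fst z) * (\<psi> (snd z) :: real))"
  by (simp add: marg2_def)

definition hh :: "('p \<Rightarrow> 'a) pmf \<Rightarrow> ('p \<Rightarrow> 'a \<Rightarrow> real) \<Rightarrow> 'p \<Rightarrow> 'a \<Rightarrow> real" where
  "hh p f i z = f i z - mu p f i"

lemma hh_mean:
  fixes p :: "('p::finite \<Rightarrow> 'a::finite) pmf"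
  shows "measure_pmf.expectation (marg1 p i) (hh p f i) = 0"
  using mean_zero[where p=p and f=f and i=i] by (simp add: marg1_def hh_def)

lemma hh_rc:
  fixes p :: "('p::finite \<Rightarrow> 'a::finite) pmf"
  shows "measure_pmf.expectation (marg2 p i j) (\<lambda>z. hh p f i (fst z) * hh p f j (snd z)) = rc p f i j"
  using centered[where p=p and f=f and i=i and j=j] by (simp add: marg2_def hh_def)

lemma hh_rc1:
  fixes p :: "('p::finite \<Rightarrow> 'a::finite) pmf"
  shows "measure_pmf.expectation (marg1 p i) (\<lambda>z. hh p f i z * hh p f i z) = rc p f i i"
  using centered[where p=p and f=f and i=i and j=i] by (simp add: marg1_def hh_def)

lemma rc_zero:
  fixes p :: "('p::finite \<Rightarrow> 'a::finite) pmf"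
  assumes cc: "causally_consistent adj p" and "i \<noteq> j" "\<not> share_source adj i j"
  shows "rc p f i j = 0"
proof -
  have "marg2 p i j = pair_pmf (marg1 p i) (marg1 p j)" using cc assms unfolding causally_consistent_def by blast
  then have "rc p f i j = measure_pmf.expectation (pair_pmf (marg1 p i) (marg1 p j)) (\<lambda>z. hh p f i (fst z) * hh p f j (snd z))"
    using hh_rc[where p=p and f=f and i=i and j=j] by simp
  also have "\<dots> = 0" by (simp add: pair_exp hh_mean)
  finally show ?thesis .
qed

lemma lift_form:
  fixes adj :: "'s::finite \<Rightarrow> 'p::finite \<Rightarrow> bool"
    and p :: "('p \<Rightarrow> 'a::finite) pmf"
    and f :: "'p \<Rightarrow> 'a \<Rightarrow> real"
  assumes net: "network adj" and bip: "bipartite_sources adj" and cc: "causally_consistent adj p"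
  shows "0 \<le> (\<Sum>i\<in>UNIV. \<Sum>j\<in>UNIV. x i * (if i = j then rc p f i i else - \<bar>rc p f i j\<bar>) * x j)"
proof -
  define lo where "lo \<alpha> = (SOME y. adj \<alpha> y)" for \<alpha>
  define cross where "cross \<alpha> = (\<exists>i j. i \<noteq> j \<and> adj \<alpha> i \<and> adj \<alpha> j \<and> 0 < rc p f i j)" for \<alpha>
  define \<pi> where "\<pi> \<alpha> i k = (if cross \<alpha> \<and> i = lo \<alpha> then 3 - k else (k::nat))" for \<alpha> i k
  have bij3: "bij_betw (\<lambda>k::nat. 3 - k) {1..2} {1..2}"
  proof -
    have e: "{1..2::nat} = {1,2}" by auto
    show ?thesis unfolding e by (auto simp: bij_betw_def inj_on_def)
  qed
  have perms: "inflation_perms adj 2 \<pi>"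
    unfolding inflation_perms_def
  proof (intro conjI allI impI)
    fix \<alpha> i
    show "bij_betw (\<pi> \<alpha> i) {1..2} {1..2}"
    proof (cases "cross \<alpha> \<and> i = lo \<alpha>")
      case True
      then have "\<pi> \<alpha> i = (\<lambda>k. 3 - k)" unfolding \<pi>_def by auto
      then show ?thesis using bij3 by simp
    next
      case False
      then have "\<pi> \<alpha> i = (\<lambda>k. k)" unfolding \<pi>_def by auto
      then show ?thesis by (simp add: bij_betw_def)
    qed
  qed simp
  have "\<exists>q :: ('p \<times> nat \<Rightarrow> 'a) pmf.
           (\<forall>i k. k \<in> {1..2} \<longrightarrow> marg1 q (i, k) = marg1 p i) \<and>
           (\<forall>i j k l. i \<noteq> j \<and> k \<in> {1..2} \<and> l \<in> {1..2} \<and>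
              infl_share_source adj \<pi> (i, k) (j, l) \<longrightarrow>
              marg2 q (i, k) (j, l) = marg2 p i j) \<and>
           (\<forall>x y. x \<noteq> y \<and> snd x \<in> {1..2} \<and> snd y \<in> {1..2} \<and>
              \<not> infl_share_source adj \<pi> x y \<longrightarrow>
              marg2 q x y = pair_pmf (marg1 q x) (marg1 q y))"
    by (rule cc[unfolded causally_consistent_def, THEN conjunct2, rule_format, OF perms])
  then obtain q :: "('p \<times> nat \<Rightarrow> 'a) pmf" where Qall:
     "(\<forall>i k. k \<in> {1..2} \<longrightarrow> marg1 q (i, k) = marg1 p i) \<and>
           (\<forall>i j k l. i \<noteq> j \<and> k \<in> {1..2} \<and> l \<in> {1..2} \<and>
              infl_share_source adj \<pi> (i, k) (j, l) \<longrightarrow>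
              marg2 q (i, k) (j, l) = marg2 p i j) \<and>
           (\<forall>x y. x \<noteq> y \<and> snd x \<in> {1..2} \<and> snd y \<in> {1..2} \<and>
              \<not> infl_share_source adj \<pi> x y \<longrightarrow>
              marg2 q x y = pair_pmf (marg1 q x) (marg1 q y))" by (elim exE)
  note Q1 = conjunct1[OF Qall, rule_format]
  note Q2 = conjunct1[OF conjunct2[OF Qall], rule_format]
  note Q3 = conjunct2[OF conjunct2[OF Qall], rule_format]
  have lo_adj: "adj \<alpha> (lo \<alpha>)" for \<alpha>
  proof -
    have "\<exists>y. adj \<alpha> y" using net unfolding network_def by blast
    then show ?thesis unfolding lo_def by (rule someI_ex)
  qed
  have lo_cases: "lo \<alpha> = i \<or> lo \<alpha> = j" if "adj \<alpha> i" "adj \<alpha> j" "i \<noteq> j" for \<alpha> i j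
    using adj_other[OF bip that lo_adj[of \<alpha>]] .
  have cross_iff: "cross \<alpha> \<longleftrightarrow> 0 < rc p f i j" if a: "adj \<alpha> i" "adj \<alpha> j" "i \<noteq> j" for \<alpha> i j
  proof
    assume "cross \<alpha>"
    then obtain i' j' where c: "i' \<noteq> j'" "adj \<alpha> i'" "adj \<alpha> j'" "0 < rc p f i' j'" unfolding cross_def by blast
    have "i' = i \<or> i' = j" "j' = i \<or> j' = j" using adj_other[OF bip a] c by auto
    then show "0 < rc p f i j" using c rc_sym[of p f i j] by auto
  next
    assume "0 < rc p f i j"
    then show "cross \<alpha>" unfolding cross_def using a by blast
  qed
  have pi_iff: "\<pi> \<alpha> i k = \<pi> \<alpha> j l \<longleftrightarrow> (k = l \<longleftrightarrow> \<not> 0 < rc p f i j)"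
    if a: "adj \<alpha> i" "adj \<alpha> j" "i \<noteq> j" and k: "k \<in> {1,2}" and l: "l \<in> {1,2}" for \<alpha> i j k l
  proof -
    have c: "cross \<alpha> \<longleftrightarrow> 0 < rc p f i j" by (rule cross_iff[OF a])
    have lc: "lo \<alpha> = i \<or> lo \<alpha> = j" by (rule lo_cases[OF a])
    have ar: "(3 - k = l) \<longleftrightarrow> (k \<noteq> l)" "(k = 3 - l) \<longleftrightarrow> (k \<noteq> l)" using k l by (simp, elim disjE, simp_all)+
    show ?thesis
    proof (cases "lo \<alpha> = i")
      case True
      then have "lo \<alpha> \<noteq> j" using a(3) by auto
      then have "\<pi> \<alpha> j l = l" unfolding \<pi>_def by simp
      moreover have "\<pi> \<alpha> i k = (if 0 < rc p f i j then 3 - k else k)" unfolding \<pi>_def using True c by simp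
      ultimately show ?thesis using ar by simp
    next
      case False
      then have j: "lo \<alpha> = j" using lc by simp
      then have "\<pi> \<alpha> i k = k" unfolding \<pi>_def using False by simp
      moreover have "\<pi> \<alpha> j l = (if 0 < rc p f i j then 3 - l else l)" unfolding \<pi>_def using j c by simp
      ultimately show ?thesis using ar by simp
    qed
  qed
  have share_iff: "infl_share_source adj \<pi> (i, k) (j, l) \<longleftrightarrow> share_source adj i j \<and> (k = l \<longleftrightarrow> \<not> 0 < rc p f i j)"
    if ij: "i \<noteq> j" and k: "k \<in> {1,2}" and l: "l \<in> {1,2}" for i j k l
  proof
    assume "infl_share_source adj \<pi> (i, k) (j, l)"
    then obtain \<alpha> where a: "adj \<alpha> i" "adj \<alpha> j" "\<pi> \<alpha> i k = \<pi> \<alpha> j l" unfolding infl_share_source_def by auto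
    show "share_source adj i j \<and> (k = l \<longleftrightarrow> \<not> 0 < rc p f i j)"
    proof
      show "share_source adj i j" unfolding share_source_def using a by blast
      show "(k = l \<longleftrightarrow> \<not> 0 < rc p f i j)" using pi_iff[OF a(1,2) ij k l] a(3) by simp
    qed
  next
    assume "share_source adj i j \<and> (k = l \<longleftrightarrow> \<not> 0 < rc p f i j)"
    then obtain \<alpha> where a: "adj \<alpha> i" "adj \<alpha> j" and e: "(k = l \<longleftrightarrow> \<not> 0 < rc p f i j)"
      unfolding share_source_def by blast
    then have "\<pi> \<alpha> i k = \<pi> \<alpha> j l" using pi_iff[OF a ij k l] by blast
    then show "infl_share_source adj \<pi> (i, k) (j, l)" unfolding infl_share_source_def using a by auto
  qed
  have self_noshare: "\<not> infl_share_source adj \<pi> (i, k) (i, l)" if "k \<noteq> l" "k \<in> {1,2}" "l \<in> {1,2}" for i k l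
  proof
    assume "infl_share_source adj \<pi> (i, k) (i, l)"
    then obtain \<alpha> where "\<pi> \<alpha> i k = \<pi> \<alpha> i l" unfolding infl_share_source_def by auto
    then have "(if cross \<alpha> \<and> i = lo \<alpha> then 3 - k else k) = (if cross \<alpha> \<and> i = lo \<alpha> then 3 - l else l)"
      unfolding \<pi>_def .
    then have "k = l" using that(2,3) by (cases "cross \<alpha> \<and> i = lo \<alpha>") (simp_all, elim disjE, simp_all)
    then show False using that by simp
  qed
  define G where "G i k j l = measure_pmf.expectation q (\<lambda>a. hh p f i (a (i, k)) * hh p f j (a (j, l)))" for i k j l
  have G0: "G i k j l = 0" if "(i, k) \<noteq> (j, l)" "k \<in> {1,2}" "l \<in> {1,2}" "\<not> infl_share_source adj \<pi> (i, k) (j, l)" for i k j l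
  proof -
    have k12: "k \<in> {1..2}" "l \<in> {1..2}" using that by auto
    have "G i k j l = measure_pmf.expectation (marg2 q (i, k) (j, l)) (\<lambda>z. hh p f i (fst z) * hh p f j (snd z))"
      unfolding G_def by (rule E2)
    also have "\<dots> = measure_pmf.expectation (pair_pmf (marg1 p i) (marg1 p j)) (\<lambda>z. hh p f i (fst z) * hh p f j (snd z))"
      using Q3[of "(i, k)" "(j, l)"] that k12 Q1 by simp
    also have "\<dots> = 0" by (simp add: pair_exp hh_mean)
    finally show ?thesis .
  qed
  have Gs: "G i k j l = rc p f i j" if "i \<noteq> j" "k \<in> {1,2}" "l \<in> {1,2}" "infl_share_source adj \<pi> (i, k) (j, l)" for i k j l
  proof -
    have k12: "k \<in> {1..2}" "l \<in> {1..2}" using that by auto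
    have "G i k j l = measure_pmf.expectation (marg2 q (i, k) (j, l)) (\<lambda>z. hh p f i (fst z) * hh p f j (snd z))"
      unfolding G_def by (rule E2)
    also have "\<dots> = measure_pmf.expectation (marg2 p i j) (\<lambda>z. hh p f i (fst z) * hh p f j (snd z))"
      using Q2[of i j k l] that k12 by simp
    also have "\<dots> = rc p f i j" by (rule hh_rc)
    finally show ?thesis .
  qed
  have Gd: "G i k i k = rc p f i i" if "k \<in> {1,2}" for i k
  proof -
    have k12: "k \<in> {1..2}" using that by auto
    have "G i k i k = measure_pmf.expectation (marg1 q (i, k)) (\<lambda>z. hh p f i z * hh p f i z)"
      unfolding G_def by (rule E1)
    also have "\<dots> = rc p f i i" using Q1[OF k12] hh_rc1 by simp
    finally show ?thesis .
  qed
  define Km where "Km i j = (if i = j then rc p f i i else - \<bar>rc p f i j\<bar>)" for i j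
  have T: "G i 1 j 1 - G i 1 j 2 - G i 2 j 1 + G i 2 j 2 = 2 * Km i j" for i j
  proof (cases "i = j")
    case True
    have "G i 1 i 2 = 0" "G i 2 i 1 = 0" using G0 self_noshare by auto
    then show ?thesis using True Gd[of 1 i] Gd[of 2 i] unfolding Km_def by simp
  next
    case ij: False
    show ?thesis
    proof (cases "share_source adj i j")
      case False
      have "G i k j l = 0" if "k \<in> {1,2}" "l \<in> {1,2}" for k l
        using G0 share_iff[OF ij] that False ij by auto
      moreover have "rc p f i j = 0" using rc_zero[OF cc ij False] .
      ultimately show ?thesis unfolding Km_def using ij by simp
    next
      case sh: True
      show ?thesis
      proof (cases "0 < rc p f i j")
        case True
        have "G i 1 j 1 = 0" "G i 2 j 2 = 0" using G0 share_iff[OF ij] ij True by auto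
        moreover have "G i 1 j 2 = rc p f i j" "G i 2 j 1 = rc p f i j" using Gs share_iff[OF ij] ij True sh by auto
        ultimately show ?thesis unfolding Km_def using ij True by simp
      next
        case False
        have "G i 1 j 2 = 0" "G i 2 j 1 = 0" using G0 share_iff[OF ij] ij False by auto
        moreover have "G i 1 j 1 = rc p f i j" "G i 2 j 2 = rc p f i j" using Gs share_iff[OF ij] ij False sh by auto
        ultimately show ?thesis unfolding Km_def using ij False by simp
      qed
    qed
  qed
  define r where "r = map_pmf (\<lambda>a i. (a (i, 1::nat), a (i, 2::nat))) q"
  define D where "D i b = hh p f i (fst (b i)) - hh p f i (snd (b i))" for i and b :: "'p \<Rightarrow> 'a \<times> 'a"
  have ER: "measure_pmf.expectation r (\<lambda>b. \<phi> (b i) * \<psi> (b j)) =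
      measure_pmf.expectation q (\<lambda>a. \<phi> (a (i, 1), a (i, 2)) * (\<psi> (a (j, 1), a (j, 2)) :: real))" for \<phi> \<psi> i j
    unfolding r_def by simp
  have ED: "measure_pmf.expectation r (\<lambda>b. D i b * D j b) = G i 1 j 1 - G i 1 j 2 - G i 2 j 1 + G i 2 j 2" for i j
  proof -
    have e: "(\<lambda>b. D i b * D j b) = (\<lambda>b. hh p f i (fst (b i)) * hh p f j (fst (b j)) - hh p f i (fst (b i)) * hh p f j (snd (b j))
       - hh p f i (snd (b i)) * hh p f j (fst (b j)) + hh p f i (snd (b i)) * hh p f j (snd (b j)))"
      unfolding D_def by (auto simp: algebra_simps)
    show ?thesis unfolding e G_def
      by (simp add: Bochner_Integration.integral_diff Bochner_Integration.integral_add ER[where \<phi>="\<lambda>z. hh p f i (fst z)" and \<psi>="\<lambda>z. hh p f j (fst z)"]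
           ER[where \<phi>="\<lambda>z. hh p f i (fst z)" and \<psi>="\<lambda>z. hh p f j (snd z)"]
           ER[where \<phi>="\<lambda>z. hh p f i (snd z)" and \<psi>="\<lambda>z. hh p f j (fst z)"]
           ER[where \<phi>="\<lambda>z. hh p f i (snd z)" and \<psi>="\<lambda>z. hh p f j (snd z)"])
  qed
  have "2 * (\<Sum>i\<in>UNIV. \<Sum>j\<in>UNIV. x i * Km i j * x j) = (\<Sum>i\<in>UNIV. \<Sum>j\<in>UNIV. x i * (2 * Km i j) * x j)"
    by (simp add: sum_distrib_left algebra_simps)
  also have "\<dots> = (\<Sum>i\<in>UNIV. \<Sum>j\<in>UNIV. measure_pmf.expectation r (\<lambda>b. x i * (D i b * D j b) * x j))"
    by (simp only: integral_mult_left_zero integral_mult_right_zero ED T)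
  also have "\<dots> = measure_pmf.expectation r (\<lambda>b. \<Sum>i\<in>UNIV. \<Sum>j\<in>UNIV. x i * (D i b * D j b) * x j)"
    by (simp add: Bochner_Integration.integral_sum)
  also have "\<dots> = measure_pmf.expectation r (\<lambda>b. (\<Sum>i\<in>UNIV. x i * D i b)^2)"
  proof -
    have "\<And>b. (\<Sum>i\<in>UNIV. x i * D i b)^2 = (\<Sum>i\<in>UNIV. \<Sum>j\<in>UNIV. x i * (D i b * D j b) * x j)"
      unfolding power2_eq_square sum_product by (simp add: ac_simps)
    then show ?thesis by simp
  qed
  also have "\<dots> \<ge> 0" by simp
  finally show ?thesis unfolding Km_def by simp
qed

theorem theorem2:
  fixes adj :: "'s::finite \<Rightarrow> 'p::finite \<Rightarrow> bool"
    and p :: "('p \<Rightarrow> 'a::finite) pmf"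
    and f :: "'p \<Rightarrow> 'a \<Rightarrow> real"
  assumes "network adj"
    and "bipartite_sources adj"
    and "causally_consistent adj p"
  shows "psd (cov_matrix p (\<lambda>i x. complex_of_real (f i x)))
    \<and> N_compatible_decomp adj (cov_matrix p (\<lambda>i x. complex_of_real (f i x)))"
proof -
  note net = assms(1) and bip = assms(2) and cc = assms(3)
  have Ceq: "cov_matrix p (\<lambda>i x. complex_of_real (f i x)) = (\<lambda>i j. complex_of_real (rc p f i j))"
    by (intro ext) (rule cov_real)
  have psdC: "psd (\<lambda>i j. complex_of_real (rc p f i j))"
    by (rule psd_real) (rule rc_sym, rule rc_form)
  define Km where "Km i j = (if i = j then rc p f i i else - \<bar>rc p f i j\<bar>)" for i j
  have Ksym: "\<forall>i\<in>UNIV. \<forall>j\<in>UNIV. Km i j = Km j i"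
  proof (intro ballI)
    fix i j :: 'p
    show "Km i j = Km j i" unfolding Km_def using rc_sym[of p f i j] by auto
  qed
  have KZ: "\<forall>i\<in>UNIV. \<forall>j\<in>UNIV. i \<noteq> j \<longrightarrow> Km i j \<le> 0" unfolding Km_def by simp
  have Kpsd: "\<forall>y. 0 \<le> (\<Sum>a\<in>UNIV. \<Sum>b\<in>UNIV. y a * Km a b * y b)"
    unfolding Km_def using lift_form[OF net bip cc] by blast
  obtain u where upos: "\<And>i. 0 < u i" and urow: "\<And>i. 0 \<le> (\<Sum>j\<in>UNIV. Km i j * u j)"
  proof -
    have finU: "finite (UNIV :: 'p set)" by simp
    show ?thesis using exists_pos[OF finU Ksym KZ Kpsd] that by blast
  qed
  define w where "w i j = \<bar>rc p f i j\<bar> * u j / u i" for i j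
  define slack where "slack i = rc p f i i - (\<Sum>m\<in>UNIV. if m = i then 0 else w i m)" for i
  have slack0: "0 \<le> slack i" for i
  proof -
    have "(\<Sum>j\<in>UNIV. Km i j * u j) =
        (\<Sum>j\<in>UNIV. (if j = i then rc p f i i * u i else 0) - (if j = i then 0 else \<bar>rc p f i j\<bar> * u j))"
      unfolding Km_def by (intro sum.cong) auto
    also have "\<dots> = rc p f i i * u i - (\<Sum>j\<in>UNIV. if j = i then 0 else \<bar>rc p f i j\<bar> * u j)"
      by (simp add: sum_subtractf)
    finally have e1: "(\<Sum>j\<in>UNIV. Km i j * u j) = rc p f i i * u i - (\<Sum>j\<in>UNIV. if j = i then 0 else \<bar>rc p f i j\<bar> * u j)" .
    have e2: "(\<Sum>m\<in>UNIV. if m = i then 0 else w i m) = (\<Sum>j\<in>UNIV. if j = i then 0 else \<bar>rc p f i j\<bar> * u j) / u i"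
      unfolding w_def sum_divide_distrib by (intro sum.cong) auto
    have "slack i = (\<Sum>j\<in>UNIV. Km i j * u j) / u i"
      unfolding slack_def e1 e2 using upos[of i] by (simp add: field_simps)
    then show ?thesis using urow[of i] upos[of i] by simp
  qed
  define ch where "ch i = (SOME \<alpha>. adj \<alpha> i)" for i
  have ch_adj: "adj (ch i) i" for i
  proof -
    have "\<exists>\<alpha>. adj \<alpha> i" using net unfolding network_def by blast
    then show ?thesis unfolding ch_def by (rule someI_ex)
  qed
  define Lr where "Lr \<alpha> i j = (if adj \<alpha> i \<and> adj \<alpha> j then
      (if i = j then (\<Sum>m\<in>UNIV. if m \<noteq> i \<and> adj \<alpha> m then w i m else 0) + (if \<alpha> = ch i then slack i else 0)
       else rc p f i j) else 0)" for \<alpha> i j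
  have Lr_psd: "psd (\<lambda>i j. complex_of_real (Lr \<alpha> i j))" for \<alpha>
  proof (rule psd_real)
    fix i j show "Lr \<alpha> i j = Lr \<alpha> j i" unfolding Lr_def using rc_sym[of p f i j] by auto
  next
    fix x :: "'p \<Rightarrow> real"
    obtain a b where ab: "a \<noteq> b" and adjab: "\<And>y. adj \<alpha> y \<longleftrightarrow> y = a \<or> y = b"
      using two_parties[OF bip] by metis
    have Lz: "Lr \<alpha> i j = 0" if "\<not> adj \<alpha> i \<or> \<not> adj \<alpha> j" for i j using that unfolding Lr_def by auto
    have inner: "(\<Sum>j\<in>UNIV. x i * Lr \<alpha> i j * x j) = x i * Lr \<alpha> i a * x a + x i * Lr \<alpha> i b * x b" for i
      by (rule sum_two[OF ab]) (use Lz adjab in auto)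
    have outer: "(\<Sum>i\<in>UNIV. x i * Lr \<alpha> i a * x a + x i * Lr \<alpha> i b * x b) =
       (x a * Lr \<alpha> a a * x a + x a * Lr \<alpha> a b * x b) + (x b * Lr \<alpha> b a * x a + x b * Lr \<alpha> b b * x b)"
      by (rule sum_two[OF ab]) (use Lz adjab in auto)
    have Sab: "(\<Sum>m\<in>UNIV. if m \<noteq> a \<and> adj \<alpha> m then w a m else 0) = w a b"
      by (subst sum_single[where a=b]) (use adjab ab in auto)
    have Sba: "(\<Sum>m\<in>UNIV. if m \<noteq> b \<and> adj \<alpha> m then w b m else 0) = w b a"
      by (subst sum_single[where a=a]) (use adjab ab in auto)
    have Laa: "w a b \<le> Lr \<alpha> a a" unfolding Lr_def using adjab Sab slack0[of a] by auto
    have Lbb: "w b a \<le> Lr \<alpha> b b" unfolding Lr_def using adjab Sba slack0[of b] by auto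
    have Lab: "Lr \<alpha> a b = rc p f a b" "Lr \<alpha> b a = rc p f a b"
      unfolding Lr_def using adjab ab rc_sym[of p f a b] by auto
    have "0 \<le> Lr \<alpha> a a * (x a)^2 + 2 * rc p f a b * x a * x b + Lr \<alpha> b b * (x b)^2"
    proof (rule ineq2[OF upos[of a] upos[of b]])
      show "\<bar>rc p f a b\<bar> * u b / u a \<le> Lr \<alpha> a a" using Laa unfolding w_def .
      show "\<bar>rc p f a b\<bar> * u a / u b \<le> Lr \<alpha> b b" using Lbb rc_sym[of p f a b] unfolding w_def by simp
    qed
    also have "\<dots> = (\<Sum>i\<in>UNIV. \<Sum>j\<in>UNIV. x i * Lr \<alpha> i j * x j)"
      unfolding inner outer Lab by (simp add: power2_eq_square algebra_simps)
    finally show "0 \<le> (\<Sum>i\<in>UNIV. \<Sum>j\<in>UNIV. x i * Lr \<alpha> i j * x j)" .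
  qed
  have Lr_supp: "Lr \<alpha> i j \<noteq> 0 \<Longrightarrow> adj \<alpha> i \<and> adj \<alpha> j" for \<alpha> i j
    unfolding Lr_def by (auto split: if_splits)
  have pair_sum: "(\<Sum>\<alpha>\<in>UNIV. if adj \<alpha> i \<and> adj \<alpha> j then c else 0) = (if share_source adj i j then c else (0::real))"
    if ij: "i \<noteq> j" for i j c
  proof (cases "share_source adj i j")
    case True
    then obtain \<alpha>0 where a0: "adj \<alpha>0 i" "adj \<alpha>0 j" unfolding share_source_def by blast
    have "(\<Sum>\<alpha>\<in>UNIV. if adj \<alpha> i \<and> adj \<alpha> j then c else 0) = (if adj \<alpha>0 i \<and> adj \<alpha>0 j then c else 0)"
      by (rule sum_single) (use unique_src[OF net bip ij a0] in auto)
    then show ?thesis using True a0 by simp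
  next
    case False
    have z: "(\<lambda>\<alpha>. if adj \<alpha> i \<and> adj \<alpha> j then c else 0) = (\<lambda>\<alpha>. 0)"
      using False unfolding share_source_def by (intro ext) auto
    show ?thesis using False by (simp only: z sum.neutral_const if_False)
  qed
  have sums: "rc p f i j = (\<Sum>\<alpha>\<in>UNIV. Lr \<alpha> i j)" for i j
  proof (cases "i = j")
    case False
    have "(\<Sum>\<alpha>\<in>UNIV. Lr \<alpha> i j) = (\<Sum>\<alpha>\<in>UNIV. if adj \<alpha> i \<and> adj \<alpha> j then rc p f i j else 0)"
      unfolding Lr_def using False by (intro sum.cong) auto
    also have "\<dots> = (if share_source adj i j then rc p f i j else 0)" by (rule pair_sum[OF False])
    also have "\<dots> = rc p f i j" using rc_zero[OF cc False] by auto
    finally show ?thesis by simp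
  next
    case True
    define S where "S \<alpha> = (\<Sum>m\<in>UNIV. if m \<noteq> i \<and> adj \<alpha> m then w i m else 0)" for \<alpha>
    have "(\<Sum>\<alpha>\<in>UNIV. Lr \<alpha> i i) = (\<Sum>\<alpha>\<in>UNIV. (if adj \<alpha> i then S \<alpha> else 0) + (if adj \<alpha> i \<and> \<alpha> = ch i then slack i else 0))"
      unfolding Lr_def S_def by (intro sum.cong) auto
    also have "\<dots> = (\<Sum>\<alpha>\<in>UNIV. if adj \<alpha> i then S \<alpha> else 0) + (\<Sum>\<alpha>\<in>UNIV. if adj \<alpha> i \<and> \<alpha> = ch i then slack i else 0)"
      by (rule sum.distrib)
    also have "(\<Sum>\<alpha>\<in>UNIV. if adj \<alpha> i \<and> \<alpha> = ch i then slack i else 0) = slack i"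
      by (subst sum_single[where a="ch i"]) (use ch_adj in auto)
    also have "(\<Sum>\<alpha>\<in>UNIV. if adj \<alpha> i then S \<alpha> else 0) = (\<Sum>\<alpha>\<in>UNIV. \<Sum>m\<in>UNIV. if adj \<alpha> i \<and> m \<noteq> i \<and> adj \<alpha> m then w i m else 0)"
      unfolding S_def by (intro sum.cong) auto
    also have "\<dots> = (\<Sum>m\<in>UNIV. \<Sum>\<alpha>\<in>UNIV. if adj \<alpha> i \<and> m \<noteq> i \<and> adj \<alpha> m then w i m else 0)"
      by (rule sum.swap)
    also have "\<dots> = (\<Sum>m\<in>UNIV. if m = i then 0 else w i m)"
    proof (intro sum.cong refl)
      fix m
      show "(\<Sum>\<alpha>\<in>UNIV. if adj \<alpha> i \<and> m \<noteq> i \<and> adj \<alpha> m then w i m else 0) = (if m = i then 0 else w i m)"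
      proof (cases "m = i")
        case True then show ?thesis by simp
      next
        case False
        then have im: "i \<noteq> m" by simp
        have "(\<Sum>\<alpha>\<in>UNIV. if adj \<alpha> i \<and> m \<noteq> i \<and> adj \<alpha> m then w i m else 0) =
            (\<Sum>\<alpha>\<in>UNIV. if adj \<alpha> i \<and> adj \<alpha> m then w i m else 0)" using False by simp
        also have "\<dots> = (if share_source adj i m then w i m else 0)" by (rule pair_sum[OF im])
        also have "\<dots> = w i m" using rc_zero[OF cc im] unfolding w_def by auto
        finally show ?thesis using False by simp
      qed
    qed
    finally show ?thesis using True unfolding slack_def by simp
  qed
  have A: "\<forall>\<alpha>. psd (\<lambda>i j. complex_of_real (Lr \<alpha> i j)) \<and> (\<forall>i j. complex_of_real (Lr \<alpha> i j) \<noteq> 0 \<longrightarrow> adj \<alpha> i \<and> adj \<alpha> j)"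
    using Lr_psd Lr_supp by simp
  have B: "\<forall>i j. complex_of_real (rc p f i j) = (\<Sum>\<alpha>\<in>UNIV. complex_of_real (Lr \<alpha> i j))"
  proof (intro allI)
    fix i j show "complex_of_real (rc p f i j) = (\<Sum>\<alpha>\<in>UNIV. complex_of_real (Lr \<alpha> i j))"
      unfolding sums[of i j] by simp
  qed
  have decomp: "N_compatible_decomp adj (\<lambda>i j. complex_of_real (rc p f i j))"
    unfolding N_compatible_decomp_def
    by (rule exI[where x="\<lambda>\<alpha> i j. complex_of_real (Lr \<alpha> i j)"]) (use A B in simp)
  show ?thesis unfolding Ceq using psdC decomp by blast
qed

end
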